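(* Any two butterfly algebras are isometric and isomorphic as Lie algebras; that is, for any two butterfly algebras there is a Lie algebra isomorphism between them which is an isometry of the invariant bilinear forms.
   Context: A butterfly algebra is a real 2-step nilpotent Lie algebra $\mathfrak{b}_6$ (i.e. $[\mathfrak{b}_6,[\mathfrak{b}_6,\mathfrak{b}_6]]=0$) of dimension $6$, endowed with a symmetric bilinear form $(\cdot,\cdot)$ that is invariant, i.e. $([X,Y],Z)=-(Y,[X,Z])$ for all $X,Y,Z$, such that there exists $Z\in[\mathfrak{b}_6,\mathfrak{b}_6]$ not lying in the radical $\mathfrak{r}=\{X\in\mathfrak{b}_6\mid (X,\mathfrak{b}_6)=0\}$. *)

theory Defs
  imports "HOL-Analysis.Analysis"
begin

definition lie_bracket :: "('a::real_vector \<Rightarrow> 'a \<Rightarrow> 'a) \<Rightarrow> bool" where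
  "lie_bracket br \<longleftrightarrow> bilinear br \<and> (\<forall>x. br x x = 0) \<and>
     (\<forall>x y z. br x (br y z) + br y (br z x) + br z (br x y) = 0)"

definition derived_alg :: "('a::real_vector \<Rightarrow> 'a \<Rightarrow> 'a) \<Rightarrow> 'a set" where
  "derived_alg br = span {br x y | x y. True}"

definition two_step_nilpotent :: "('a::real_vector \<Rightarrow> 'a \<Rightarrow> 'a) \<Rightarrow> bool" where
  "two_step_nilpotent br \<longleftrightarrow> (\<forall>x. \<forall>w\<in>derived_alg br. br x w = 0)"

definition invariant_form ::
  "('a::real_vector \<Rightarrow> 'a \<Rightarrow> 'a) \<Rightarrow> ('a \<Rightarrow> 'a \<Rightarrow> real) \<Rightarrow> bool" where
  "invariant_form br B \<longleftrightarrow> bilinear B \<and> (\<forall>x y. B x y = B y x) \<and>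
     (\<forall>x y z. B (br x y) z = - B y (br x z))"

definition form_radical :: "('a \<Rightarrow> 'a \<Rightarrow> real) \<Rightarrow> 'a set" where
  "form_radical B = {x. \<forall>y. B x y = 0}"

text \<open>The underlying 6-dimensional real vector space is modelled by a type of class
  euclidean_space with DIM = 6 (its inner product plays no role).\<close>
definition butterfly ::
  "('a::euclidean_space \<Rightarrow> 'a \<Rightarrow> 'a) \<Rightarrow> ('a \<Rightarrow> 'a \<Rightarrow> real) \<Rightarrow> bool" where
  "butterfly br B \<longleftrightarrow> DIM('a) = 6 \<and> lie_bracket br \<and> two_step_nilpotent br \<and>
     invariant_form br B \<and> (\<exists>Z\<in>derived_alg br. Z \<notin> form_radical B)"

end

theory Submission
  imports Defs
begin


lemma br_basic:
  assumes "lie_bracket br"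
  shows "bilinear br" "br x x = 0" "br y x = - br x y"
proof -
  show bl: "bilinear br" using assms unfolding lie_bracket_def by auto
  have al: "\<And>x. br x x = 0" using assms unfolding lie_bracket_def by auto
  then show "br x x = 0" .
  have "br (x+y) (x+y) = br x x + br x y + br y x + br y y"
    by (simp add: bilinear_ladd[OF bl] bilinear_radd[OF bl])
  then show "br y x = - br x y" using al[of "x+y"] al[of x] al[of y]
    by (simp add: eq_neg_iff_add_eq_0 add.commute)
qed

lemma exists_T:
  assumes "lie_bracket br" "invariant_form br B" "Z \<in> derived_alg br" "Z \<notin> form_radical B"
  shows "\<exists>U V W. B (br U V) W \<noteq> 0"
proof (rule ccontr)
  assume "\<not> ?thesis"
  then have h: "\<And>U V W. B (br U V) W = 0" by auto
  have bB: "bilinear B" using assms(2) unfolding invariant_form_def by auto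
  have "\<forall>y. B Z y = 0"
  proof
    fix y
    have "Z \<in> span {br x y | x y. True}" using assms(3) unfolding derived_alg_def .
    then show "B Z y = 0"
    proof (induction rule: span_induct_alt)
      case base then show ?case by (simp add: bilinear_lzero[OF bB])
    next
      case (step c x z) then show ?case using h
        by (auto simp add: bilinear_ladd[OF bB] bilinear_lmul[OF bB])
    qed
  qed
  then show False using assms(4) unfolding form_radical_def by auto
qed



lemma dual_span:
  fixes B :: "'a::euclidean_space \<Rightarrow> 'a \<Rightarrow> real"
  assumes dim: "DIM('a) = 6" and bB: "bilinear B" and sym: "\<And>x y. B x y = B y x"
  and t: "B e1 e1 = 0" "B e1 e2 = 0" "B e1 e3 = 0" "B e2 e2 = 0" "B e2 e3 = 0" "B e3 e3 = 0"
     "B e4 e4 = 0" "B e4 e5 = 0" "B e4 e6 = 0" "B e5 e5 = 0" "B e5 e6 = 0" "B e6 e6 = 0"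
     "B e1 e4 = 1" "B e1 e5 = 0" "B e1 e6 = 0"
     "B e2 e4 = 0" "B e2 e5 = 1" "B e2 e6 = 0"
     "B e3 e4 = 0" "B e3 e5 = 0" "B e3 e6 = 1"
  shows "span {e1,e2,e3,e4,e5,e6} = UNIV"
proof -
  have tt: "B e2 e1 = 0" "B e3 e1 = 0" "B e3 e2 = 0" "B e5 e4 = 0" "B e6 e4 = 0" "B e6 e5 = 0"
     "B e4 e1 = 1" "B e5 e1 = 0" "B e6 e1 = 0"
     "B e4 e2 = 0" "B e5 e2 = 1" "B e6 e2 = 0"
     "B e4 e3 = 0" "B e5 e3 = 0" "B e6 e3 = 1"
    using t sym by metis+
  note T = t tt
  have d: "e1 \<noteq> e2" "e1 \<noteq> e3" "e1 \<noteq> e4" "e1 \<noteq> e5" "e1 \<noteq> e6"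
    "e2 \<noteq> e3" "e2 \<noteq> e4" "e2 \<noteq> e5" "e2 \<noteq> e6"
    "e3 \<noteq> e4" "e3 \<noteq> e5" "e3 \<noteq> e6" "e4 \<noteq> e5" "e4 \<noteq> e6" "e5 \<noteq> e6"
    using T by (metis zero_neq_one)+
  let ?S = "{e1,e2,e3,e4,e5,e6}"
  have card: "card ?S = 6" using d by simp
  have lin: "\<And>y. linear (\<lambda>x. B x y)" using bB unfolding bilinear_def by auto
  have ind: "independent ?S"
    unfolding independent_explicit
  proof (intro conjI allI impI ballI)
    show "finite ?S" by simp
    fix c v
    assume s: "(\<Sum>v\<in>?S. c v *\<^sub>R v) = 0" and v: "v \<in> ?S"
    have s': "c e1 *\<^sub>R e1 + (c e2 *\<^sub>R e2 + (c e3 *\<^sub>R e3 + (c e4 *\<^sub>R e4 + (c e5 *\<^sub>R e5 + c e6 *\<^sub>R e6)))) = 0"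
      using s d by simp
    have "\<And>y. B (c e1 *\<^sub>R e1 + (c e2 *\<^sub>R e2 + (c e3 *\<^sub>R e3 + (c e4 *\<^sub>R e4 + (c e5 *\<^sub>R e5 + c e6 *\<^sub>R e6))))) y = 0"
      by (simp add: s' bilinear_lzero[OF bB])
    then have "\<And>y. c e1 * B e1 y + (c e2 * B e2 y + (c e3 * B e3 y + (c e4 * B e4 y + (c e5 * B e5 y + c e6 * B e6 y)))) = 0"
      by (simp add: bilinear_ladd[OF bB] bilinear_lmul[OF bB])
    from this[of e1] this[of e2] this[of e3] this[of e4] this[of e5] this[of e6]
    show "c v = 0" using v by (auto simp: T)
  qed
  have "UNIV \<subseteq> span ?S"
    by (rule card_ge_dim_independent[OF _ ind]) (auto simp: card dim)
  then show ?thesis by auto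
qed



definition nf where
 "nf br B e1 e2 e3 e4 e5 e6 \<longleftrightarrow> br e1 e2 = e6 \<and> br e2 e3 = e4 \<and> br e3 e1 = e5 \<and>
   (\<forall>x. br x e4 = 0 \<and> br x e5 = 0 \<and> br x e6 = 0) \<and>
   B e1 e1 = 0 \<and> B e1 e2 = 0 \<and> B e1 e3 = 0 \<and> B e2 e2 = 0 \<and> B e2 e3 = 0 \<and> B e3 e3 = 0 \<and>
   B e4 e4 = 0 \<and> B e4 e5 = 0 \<and> B e4 e6 = 0 \<and> B e5 e5 = 0 \<and> B e5 e6 = 0 \<and> B e6 e6 = 0 \<and>
   B e1 e4 = 1 \<and> B e1 e5 = 0 \<and> B e1 e6 = 0 \<and>
   B e2 e4 = 0 \<and> B e2 e5 = 1 \<and> B e2 e6 = 0 \<and>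
   B e3 e4 = 0 \<and> B e3 e5 = 0 \<and> B e3 e6 = 1"

lemma normal_form:
  fixes br :: "'a::euclidean_space \<Rightarrow> 'a \<Rightarrow> 'a"
  assumes bf: "butterfly br B"
  shows "\<exists>e1 e2 e3 e4 e5 e6. nf br B e1 e2 e3 e4 e5 e6"
proof -
  have lb: "lie_bracket br" and ts: "two_step_nilpotent br" and inv: "invariant_form br B"
    and ex: "\<exists>Z\<in>derived_alg br. Z \<notin> form_radical B"
    using bf unfolding butterfly_def by auto
  have bl: "bilinear br" and al: "\<And>x. br x x = 0" and as: "\<And>x y. br y x = - br x y"
    using br_basic[OF lb] by blast+
  have bB: "bilinear B" and sym: "\<And>x y. B x y = B y x"
    and iv: "\<And>x y z. B (br x y) z = - B y (br x z)"
    using inv unfolding invariant_form_def by blast+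
  have cen: "\<And>x y z. br x (br y z) = 0"
  proof -
    fix x y z
    have "br y z \<in> span {br x y | x y. True}" by (rule span_base) blast
    then show "br x (br y z) = 0" using ts unfolding two_step_nilpotent_def derived_alg_def by blast
  qed
  have cen2: "\<And>x y z. br (br y z) x = 0" 
  proof -
    fix x y z show "br (br y z) x = 0" using as[of x "br y z"] cen[of x y z] by simp
  qed
  note simps = bilinear_ladd[OF bl] bilinear_radd[OF bl] bilinear_lmul[OF bl] bilinear_rmul[OF bl]
     bilinear_lsub[OF bl] bilinear_rsub[OF bl] bilinear_ladd[OF bB] bilinear_radd[OF bB]
     bilinear_lmul[OF bB] bilinear_rmul[OF bB] bilinear_lsub[OF bB] bilinear_rsub[OF bB]
     bilinear_lzero[OF bB] bilinear_rzero[OF bB] bilinear_lzero[OF bl] bilinear_rzero[OF bl]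
  obtain U V W where t0: "B (br U V) W \<noteq> 0" using exists_T[OF lb inv] ex by blast
  define t where "t = B (br U V) W"
  define X1 where "X1 = U"
  define X2 where "X2 = V"
  define X3 where "X3 = (1/t) *\<^sub>R W"
  have T1: "B (br X1 X2) X3 = 1" using t0 unfolding X1_def X2_def X3_def t_def
    by (simp add: simps)
  have Tsw: "\<And>a b c. B (br a b) c = - B (br b a) c"
  proof -
    fix a b c show "B (br a b) c = - B (br b a) c" using as[of a b] bilinear_lneg[OF bB] by simp
  qed
  have Tsw2: "\<And>a b c. B (br a b) c = - B (br a c) b"
  proof -
    fix a b c show "B (br a b) c = - B (br a c) b" using iv[of a b c] sym[of b "br a c"] by simp
  qed
  have cyc: "\<And>a b c. B (br a b) c = B (br b c) a"
  proof -
    fix a b c show "B (br a b) c = B (br b c) a" using Tsw[of a b c] Tsw2[of b a c] by simp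
  qed
  have z1: "\<And>a b. B (br a b) a = 0"
  proof -
    fix a b show "B (br a b) a = 0" using Tsw2[of a b a] al[of a] by (simp add: simps)
  qed
  have z2: "\<And>a b. B (br a b) b = 0"
  proof -
    fix a b show "B (br a b) b = 0" using Tsw2[of a b b] by simp
  qed
  have zz: "\<And>a b c d. B (br a b) (br c d) = 0"
  proof -
    fix a b c d show "B (br a b) (br c d) = 0" using iv[of a b "br c d"] cen[of a c d] by (simp add: simps)
  qed
  define Z1 where "Z1 = br X2 X3"
  define Z2 where "Z2 = br X3 X1"
  define Z3 where "Z3 = br X1 X2"
  have ZX: "B Z1 X1 = 1" "B Z1 X2 = 0" "B Z1 X3 = 0" "B Z2 X1 = 0" "B Z2 X2 = 1" "B Z2 X3 = 0"
    "B Z3 X1 = 0" "B Z3 X2 = 0" "B Z3 X3 = 1"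
    unfolding Z1_def Z2_def Z3_def
    using T1 cyc[of X1 X2 X3] cyc[of X2 X3 X1] z1 z2 by simp_all
  have XZ: "B X1 Z1 = 1" "B X1 Z2 = 0" "B X1 Z3 = 0" "B X2 Z1 = 0" "B X2 Z2 = 1" "B X2 Z3 = 0"
    "B X3 Z1 = 0" "B X3 Z2 = 0" "B X3 Z3 = 1" using ZX
    by (simp_all add: sym[of X1 Z1] sym[of X1 Z2] sym[of X1 Z3] sym[of X2 Z1] sym[of X2 Z2] sym[of X2 Z3]
      sym[of X3 Z1] sym[of X3 Z2] sym[of X3 Z3])
  have ZZ: "B Zi Zj = 0" if "Zi \<in> {Z1,Z2,Z3}" "Zj \<in> {Z1,Z2,Z3}" for Zi Zj
    using that zz unfolding Z1_def Z2_def Z3_def by auto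
  have brZ: "br x Zi = 0" "br Zi x = 0" if "Zi \<in> {Z1,Z2,Z3}" for x Zi
    using that cen cen2 unfolding Z1_def Z2_def Z3_def by auto
  define s where "s = (\<lambda>a b. B a b / 2)"
  define Y1 where "Y1 = X1 - (s X1 X1 *\<^sub>R Z1 + s X1 X2 *\<^sub>R Z2 + s X1 X3 *\<^sub>R Z3)"
  define Y2 where "Y2 = X2 - (s X2 X1 *\<^sub>R Z1 + s X2 X2 *\<^sub>R Z2 + s X2 X3 *\<^sub>R Z3)"
  define Y3 where "Y3 = X3 - (s X3 X1 *\<^sub>R Z1 + s X3 X2 *\<^sub>R Z2 + s X3 X3 *\<^sub>R Z3)"
  have bz: "\<And>x. br x Z1 = 0" "\<And>x. br x Z2 = 0" "\<And>x. br x Z3 = 0"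
    "\<And>x. br Z1 x = 0" "\<And>x. br Z2 x = 0" "\<And>x. br Z3 x = 0" using brZ by auto
  have zzz: "B Z1 Z1 = 0" "B Z1 Z2 = 0" "B Z1 Z3 = 0" "B Z2 Z1 = 0" "B Z2 Z2 = 0" "B Z2 Z3 = 0"
     "B Z3 Z1 = 0" "B Z3 Z2 = 0" "B Z3 Z3 = 0" using ZZ by auto
  have a13: "br X1 X3 = - Z2" unfolding Z2_def using as[of X1 X3] by simp
  have "nf br B Y1 Y2 Y3 Z1 Z2 Z3"
    unfolding nf_def Y1_def Y2_def Y3_def
    using bz zzz XZ ZX sym[of X2 X1] sym[of X3 X1] sym[of X3 X2] al a13
    by (simp add: simps Z1_def[symmetric] Z2_def[symmetric] Z3_def[symmetric] s_def algebra_simps)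
  then show ?thesis by blast
qed



lemma nf_tab:
  assumes "nf br B e1 e2 e3 e4 e5 e6" "\<And>x y. B x y = B y x" "lie_bracket br"
  shows "B e1 e1 = 0" "B e1 e2 = 0" "B e1 e3 = 0" "B e2 e2 = 0" "B e2 e3 = 0" "B e3 e3 = 0"
     "B e4 e4 = 0" "B e4 e5 = 0" "B e4 e6 = 0" "B e5 e5 = 0" "B e5 e6 = 0" "B e6 e6 = 0"
     "B e1 e4 = 1" "B e1 e5 = 0" "B e1 e6 = 0"
     "B e2 e4 = 0" "B e2 e5 = 1" "B e2 e6 = 0"
     "B e3 e4 = 0" "B e3 e5 = 0" "B e3 e6 = 1"
   "B e2 e1 = 0" "B e3 e1 = 0" "B e3 e2 = 0" "B e5 e4 = 0" "B e6 e4 = 0" "B e6 e5 = 0"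
     "B e4 e1 = 1" "B e5 e1 = 0" "B e6 e1 = 0"
     "B e4 e2 = 0" "B e5 e2 = 1" "B e6 e2 = 0"
     "B e4 e3 = 0" "B e5 e3 = 0" "B e6 e3 = 1"
   "br e1 e2 = e6" "br e2 e3 = e4" "br e3 e1 = e5"
   "br e2 e1 = - e6" "br e3 e2 = - e4" "br e1 e3 = - e5"
   "br e1 e1 = 0" "br e2 e2 = 0" "br e3 e3 = 0"
   "\<And>x. br x e4 = 0" "\<And>x. br x e5 = 0" "\<And>x. br x e6 = 0"
   "\<And>x. br e4 x = 0" "\<And>x. br e5 x = 0" "\<And>x. br e6 x = 0"
  using assms(1) unfolding nf_def
  apply (simp_all add: assms(2)[of e2 e1] assms(2)[of e3 e1] assms(2)[of e3 e2] assms(2)[of e5 e4]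
    assms(2)[of e6 e4] assms(2)[of e6 e5] assms(2)[of e4 e1] assms(2)[of e5 e1] assms(2)[of e6 e1]
    assms(2)[of e4 e2] assms(2)[of e5 e2] assms(2)[of e6 e2] assms(2)[of e4 e3] assms(2)[of e5 e3]
    assms(2)[of e6 e3] br_basic(2)[OF assms(3)])
  by (metis br_basic(3)[OF assms(3)] minus_zero)+

lemma expand:
  assumes "nf br B e1 e2 e3 e4 e5 e6" "\<And>x y. B x y = B y x" "lie_bracket br"
    "span {e1,e2,e3,e4,e5,e6} = UNIV" "bilinear B"
  shows "x = B x e4 *\<^sub>R e1 + B x e5 *\<^sub>R e2 + B x e6 *\<^sub>R e3 + B x e1 *\<^sub>R e4 + B x e2 *\<^sub>R e5 + B x e3 *\<^sub>R e6"
proof -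
  note T = nf_tab[OF assms(1-3)]
  note simps = bilinear_ladd[OF assms(5)] bilinear_lmul[OF assms(5)]
  have l: "linear (\<lambda>x. B x e4 *\<^sub>R e1 + B x e5 *\<^sub>R e2 + B x e6 *\<^sub>R e3 + B x e1 *\<^sub>R e4 + B x e2 *\<^sub>R e5 + B x e3 *\<^sub>R e6)"
    by (rule linearI) (simp_all add: simps algebra_simps)
  have "id x = (\<lambda>x. B x e4 *\<^sub>R e1 + B x e5 *\<^sub>R e2 + B x e6 *\<^sub>R e3 + B x e1 *\<^sub>R e4 + B x e2 *\<^sub>R e5 + B x e3 *\<^sub>R e6) x"
    by (rule linear_eq_on_span[OF linear_id l, of "{e1,e2,e3,e4,e5,e6}" x]) (auto simp: assms(4) T)
  then show ?thesis by simp
qed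



theorem corollary5p4:
  fixes br1 :: "'a::euclidean_space \<Rightarrow> 'a \<Rightarrow> 'a" and B1 :: "'a \<Rightarrow> 'a \<Rightarrow> real"
    and br2 :: "'b::euclidean_space \<Rightarrow> 'b \<Rightarrow> 'b" and B2 :: "'b \<Rightarrow> 'b \<Rightarrow> real"
  assumes "butterfly br1 B1" and "butterfly br2 B2"
  shows "\<exists>f :: 'a \<Rightarrow> 'b. linear f \<and> bij f \<and>
           (\<forall>x y. f (br1 x y) = br2 (f x) (f y)) \<and>
           (\<forall>x y. B2 (f x) (f y) = B1 x y)"
proof -
  obtain e1 e2 e3 e4 e5 e6 where ne: "nf br1 B1 e1 e2 e3 e4 e5 e6" using normal_form[OF assms(1)] by blast
  obtain d1 d2 d3 d4 d5 d6 where nd: "nf br2 B2 d1 d2 d3 d4 d5 d6" using normal_form[OF assms(2)] by blast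
  have lb1: "lie_bracket br1" and dim1: "DIM('a) = 6" and bB1: "bilinear B1" and sym1: "\<And>x y. B1 x y = B1 y x"
    using assms(1) unfolding butterfly_def invariant_form_def by blast+
  have lb2: "lie_bracket br2" and dim2: "DIM('b) = 6" and bB2: "bilinear B2" and sym2: "\<And>x y. B2 x y = B2 y x"
    using assms(2) unfolding butterfly_def invariant_form_def by blast+
  have bl1: "bilinear br1" using br_basic[OF lb1] by blast
  have bl2: "bilinear br2" using br_basic[OF lb2] by blast
  note Te = nf_tab[OF ne sym1 lb1]
  note Td = nf_tab[OF nd sym2 lb2]
  have sp1: "span {e1,e2,e3,e4,e5,e6} = UNIV"
    by (rule dual_span[OF dim1 bB1 sym1]) (use Te in simp_all)
  have sp2: "span {d1,d2,d3,d4,d5,d6} = UNIV"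
    by (rule dual_span[OF dim2 bB2 sym2]) (use Td in simp_all)
  define f where "f x = B1 x e4 *\<^sub>R d1 + B1 x e5 *\<^sub>R d2 + B1 x e6 *\<^sub>R d3 + B1 x e1 *\<^sub>R d4 + B1 x e2 *\<^sub>R d5 + B1 x e3 *\<^sub>R d6" for x
  define g where "g y = B2 y d4 *\<^sub>R e1 + B2 y d5 *\<^sub>R e2 + B2 y d6 *\<^sub>R e3 + B2 y d1 *\<^sub>R e4 + B2 y d2 *\<^sub>R e5 + B2 y d3 *\<^sub>R e6" for y
  have lf: "linear f" unfolding f_def
    by (rule linearI) (simp_all add: bilinear_ladd[OF bB1] bilinear_lmul[OF bB1] algebra_simps)
  have lg: "linear g" unfolding g_def
    by (rule linearI) (simp_all add: bilinear_ladd[OF bB2] bilinear_lmul[OF bB2] algebra_simps)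
  have fe: "f e1 = d1" "f e2 = d2" "f e3 = d3" "f e4 = d4" "f e5 = d5" "f e6 = d6"
    unfolding f_def by (simp_all add: Te)
  have gd: "g d1 = e1" "g d2 = e2" "g d3 = e3" "g d4 = e4" "g d5 = e5" "g d6 = e6"
    unfolding g_def by (simp_all add: Td)
  have gf: "g (f x) = x" for x
  proof -
    have "g (f x) = B1 x e4 *\<^sub>R g d1 + B1 x e5 *\<^sub>R g d2 + B1 x e6 *\<^sub>R g d3 + B1 x e1 *\<^sub>R g d4 + B1 x e2 *\<^sub>R g d5 + B1 x e3 *\<^sub>R g d6"
      unfolding f_def by (simp add: linear_add[OF lg] linear_scale[OF lg])
    also have "\<dots> = x" using expand[OF ne sym1 lb1 sp1 bB1, of x] by (simp add: gd)
    finally show ?thesis .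
  qed
  have fg: "f (g y) = y" for y
  proof -
    have "f (g y) = B2 y d4 *\<^sub>R f e1 + B2 y d5 *\<^sub>R f e2 + B2 y d6 *\<^sub>R f e3 + B2 y d1 *\<^sub>R f e4 + B2 y d2 *\<^sub>R f e5 + B2 y d3 *\<^sub>R f e6"
      unfolding g_def by (simp add: linear_add[OF lf] linear_scale[OF lf])
    also have "\<dots> = y" using expand[OF nd sym2 lb2 sp2 bB2, of y] by (simp add: fe)
    finally show ?thesis .
  qed
  have bij: "bij f" by (rule o_bij[of g]) (auto simp: gf fg)
  have hb1: "bilinear (\<lambda>x y. f (br1 x y))"
    using bl1 lf unfolding bilinear_def by (auto intro: linear_compose[unfolded o_def])
  have hb2: "bilinear (\<lambda>x y. br2 (f x) (f y))"
    using bl2 lf unfolding bilinear_def by (auto intro: linear_compose[unfolded o_def])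
  have hc1: "bilinear (\<lambda>x y. B2 (f x) (f y))"
    using bB2 lf unfolding bilinear_def by (auto intro: linear_compose[unfolded o_def])
  have brs: "f (br1 x y) = br2 (f x) (f y)" for x y
    by (rule bilinear_eq[OF hb1 hb2, of UNIV "{e1,e2,e3,e4,e5,e6}" UNIV "{e1,e2,e3,e4,e5,e6}"])
       (auto simp: sp1 Te Td fe linear_neg[OF lf] linear_0[OF lf])
  have Bs: "B2 (f x) (f y) = B1 x y" for x y
    by (rule bilinear_eq[OF hc1 bB1, of UNIV "{e1,e2,e3,e4,e5,e6}" UNIV "{e1,e2,e3,e4,e5,e6}"])
       (auto simp: sp1 Te Td fe)
  show ?thesis using lf bij brs Bs by blast
qed

end
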